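(* The quaternionic group $\mathcal{Q}$ is freely generated by the set of all elementary generators $\{\overline{g}[r]\}_{r\in\mathbb{Q}}$.
   Context: Let $\Phi=1+t^{-1}+t$, and for $f\in\mathbb{Q}[t,t^{-1}]$ let $\overline{f}(t)=f(t^{-1})$. $\mathrm{PGL}(2,\mathbb{Q}[t,t^{-1}])$ is the quotient of $\mathrm{GL}(2,\mathbb{Q}[t,t^{-1}])$ by scalar matrices with unit entries. The quaternionic group is $\mathcal{Q}=\{M\in\mathrm{PGL}(2,\mathbb{Q}[t,t^{-1}]) : M \text{ has a representative of the form }\begin{pmatrix}g_1&g_2\\-\Phi\overline{g_2}&\overline{g_1}\end{pmatrix}\text{ with }g_1,g_2\in\mathbb{Q}[t,t^{-1}]\}$. For $r\in\mathbb{Q}$ let $g[r]=\begin{pmatrix}t-r^2&r\\-r(1+t^{-1}+t)&t^{-1}-r^2\end{pmatrix}\in\mathrm{GL}(2,\mathbb{Q}[t,t^{-1}])$ (its determinant is $1+r^2+r^4$), and let the elementary generator $\overline{g}[r]$ be its image in $\mathrm{PGL}(2,\mathbb{Q}[t,t^{-1}])$. *)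

theory Defs
  imports "HOL-Computational_Algebra.Formal_Laurent_Series" "HOL-Algebra.Generated_Groups"
begin

definition laurent_polys :: "rat fls set" where
  "laurent_polys = {f. finite {n. fls_nth f n \<noteq> 0}}"

definition lp_units :: "rat fls set" where
  "lp_units = {u \<in> laurent_polys. \<exists>v \<in> laurent_polys. u * v = 1}"

definition lp_bar :: "rat fls \<Rightarrow> rat fls" where
  "lp_bar f = (\<Sum>n\<in>{n. fls_nth f n \<noteq> 0}. fls_const (fls_nth f n) * fls_X_intpow (- n))"

definition Phi :: "rat fls" where
  "Phi = 1 + fls_X_inv + fls_X"

datatype mat2 = M2 (e11: "rat fls") (e12: "rat fls") (e21: "rat fls") (e22: "rat fls")

definition mat2_mult :: "mat2 \<Rightarrow> mat2 \<Rightarrow> mat2" where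
  "mat2_mult A B = M2 (e11 A * e11 B + e12 A * e21 B) (e11 A * e12 B + e12 A * e22 B)
                      (e21 A * e11 B + e22 A * e21 B) (e21 A * e12 B + e22 A * e22 B)"

definition mat2_one :: mat2 where
  "mat2_one = M2 1 0 0 1"

definition mat2_det :: "mat2 \<Rightarrow> rat fls" where
  "mat2_det A = e11 A * e22 A - e12 A * e21 A"

definition mat2_smult :: "rat fls \<Rightarrow> mat2 \<Rightarrow> mat2" where
  "mat2_smult c A = M2 (c * e11 A) (c * e12 A) (c * e21 A) (c * e22 A)"

definition GL2 :: "mat2 set" where
  "GL2 = {A. e11 A \<in> laurent_polys \<and> e12 A \<in> laurent_polys \<and> e21 A \<in> laurent_polys
            \<and> e22 A \<in> laurent_polys \<and> mat2_det A \<in> lp_units}"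

definition pgl_class :: "mat2 \<Rightarrow> mat2 set" where
  "pgl_class A = {B \<in> GL2. \<exists>c \<in> lp_units. B = mat2_smult c A}"

definition PGL2 :: "mat2 set monoid" where
  "PGL2 = \<lparr> carrier = pgl_class ` GL2,
            mult = (\<lambda>X Y. pgl_class (mat2_mult (SOME A. A \<in> X) (SOME B. B \<in> Y))),
            one = pgl_class mat2_one \<rparr>"

definition quat_mat :: "rat fls \<Rightarrow> rat fls \<Rightarrow> mat2" where
  "quat_mat g1 g2 = M2 g1 g2 (- Phi * lp_bar g2) (lp_bar g1)"

definition quaternionic_group :: "mat2 set set" where
  "quaternionic_group = {X \<in> carrier PGL2.
      \<exists>g1 \<in> laurent_polys. \<exists>g2 \<in> laurent_polys. quat_mat g1 g2 \<in> X}"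

definition g_mat :: "rat \<Rightarrow> mat2" where
  "g_mat r = M2 (fls_X - fls_const (r^2)) (fls_const r)
               (- fls_const r * (1 + fls_X_inv + fls_X)) (fls_X_inv - fls_const (r^2))"

definition elem_gen :: "rat \<Rightarrow> mat2 set" where
  "elem_gen r = pgl_class (g_mat r)"

text \<open>Words in the generators: (i, True) stands for x_i, (i, False) for its inverse.\<close>
fun reduced_word :: "('i \<times> bool) list \<Rightarrow> bool" where
  "reduced_word ((i, b) # (j, c) # w) = (\<not> (i = j \<and> b \<noteq> c) \<and> reduced_word ((j, c) # w))"
| "reduced_word _ = True"

fun word_eval :: "('a, 'b) monoid_scheme \<Rightarrow> ('i \<Rightarrow> 'a) \<Rightarrow> ('i \<times> bool) list \<Rightarrow> 'a" where
  "word_eval G x [] = \<one>\<^bsub>G\<^esub>"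
| "word_eval G x ((i, b) # w) =
     (if b then x i else inv\<^bsub>G\<^esub> (x i)) \<otimes>\<^bsub>G\<^esub> word_eval G x w"

text \<open>The subset H of the group G is freely generated by the family x: H is the subgroup
  generated by the x_i, and no nonempty reduced word in the x_i evaluates to the identity
  (in particular the x_i are pairwise distinct, so {x_i} is a free basis).\<close>
definition freely_generated_by :: "('a, 'b) monoid_scheme \<Rightarrow> 'a set \<Rightarrow> ('i \<Rightarrow> 'a) \<Rightarrow> bool" where
  "freely_generated_by G H x \<longleftrightarrow>
     generate G (range x) = H \<and>
     (\<forall>w. w \<noteq> [] \<and> reduced_word w \<longrightarrow> word_eval G x w \<noteq> \<one>\<^bsub>G\<^esub>)"

end

theory Submission
  imports Defs
begin

unbundle fps_syntax


type_synonym lp = "rat fls"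

definition supp :: "rat fls \<Rightarrow> int set" where "supp f = {n. f $$ n \<noteq> 0}"

lemma LP_iff: "f \<in> laurent_polys \<longleftrightarrow> finite (supp f)"
  by (simp add: laurent_polys_def supp_def)

lemma nthX[simp]: "(fls_X * f) $$ n = (f::rat fls) $$ (n - 1)"
  by (simp add: fls_X_times_conv_shift)
lemma nthXi[simp]: "(fls_X_inv * f) $$ n = (f::rat fls) $$ (n + 1)"
  by (simp add: fls_X_inv_times_conv_shift)
lemma nthT[simp]: "(fls_X_intpow k * f) $$ n = (f::rat fls) $$ (n - k)"
  by (simp add: fls_X_intpow_times_conv_shift)

lemma conv:
  assumes "f \<in> laurent_polys"
  shows "(f * g) $$ n = (\<Sum>i\<in>supp f. f $$ i * g $$ (n - i))"
proof -
  let ?I = "{fls_subdegree f..n - fls_subdegree g}"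
  let ?h = "\<lambda>i. f $$ i * g $$ (n - i)"
  have fin: "finite (supp f)" using assms LP_iff by auto
  have "(f * g) $$ n = sum ?h ?I" by (rule fls_times_nth(2))
  also have "\<dots> = sum ?h (?I \<union> supp f)"
  proof (rule sum.mono_neutral_left)
    show "\<forall>i\<in>?I \<union> supp f - ?I. ?h i = 0"
    proof
      fix i assume i: "i \<in> ?I \<union> supp f - ?I"
      show "?h i = 0"
      proof (cases "f $$ i = 0")
        case False
        then have "fls_subdegree f \<le> i" by (rule fls_subdegree_leI)
        with i have "n - i < fls_subdegree g" by auto
        then show ?thesis by simp
      qed simp
    qed
  qed (auto simp: fin)
  also have "\<dots> = sum ?h (supp f)"
  proof (rule sum.mono_neutral_right)
    show "finite (?I \<union> supp f)" using fin by auto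
    show "\<forall>i\<in>?I \<union> supp f - supp f. ?h i = 0" by (auto simp: supp_def)
  qed auto
  finally show ?thesis .
qed

lemma supp_mult_sub: assumes "f \<in> laurent_polys"
  shows "supp (f * g) \<subseteq> (\<lambda>(i,j). i + j) ` (supp f \<times> supp g)"
proof
  fix n assume "n \<in> supp (f*g)"
  then have "(\<Sum>i\<in>supp f. f $$ i * g $$ (n - i)) \<noteq> 0" using conv[OF assms] by (simp add: supp_def)
  then obtain i where "i \<in> supp f" "f $$ i * g $$ (n - i) \<noteq> 0" by (meson sum.neutral)
  then have "(i, n - i) \<in> supp f \<times> supp g" by (auto simp: supp_def)
  then show "n \<in> (\<lambda>(i,j). i + j) ` (supp f \<times> supp g)" by force
qed

lemma LP_mult[intro]: "f \<in> laurent_polys \<Longrightarrow> g \<in> laurent_polys \<Longrightarrow> f * g \<in> laurent_polys"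
  using supp_mult_sub[of f g] unfolding LP_iff by (meson finite_SigmaI finite_imageI finite_subset)

lemma LP_add[intro]: "f \<in> laurent_polys \<Longrightarrow> g \<in> laurent_polys \<Longrightarrow> f + g \<in> laurent_polys"
  unfolding LP_iff supp_def by (rule finite_subset[of _ "{n. f $$ n \<noteq> 0} \<union> {n. g $$ n \<noteq> 0}"]) auto

lemma LP_uminus[intro]: "f \<in> laurent_polys \<Longrightarrow> - f \<in> laurent_polys"
  unfolding LP_iff supp_def by simp

lemma LP_diff[intro]: "f \<in> laurent_polys \<Longrightarrow> g \<in> laurent_polys \<Longrightarrow> f - g \<in> laurent_polys"
  using LP_add[of f "-g"] LP_uminus by simp

lemma LP_const[intro, simp]: "fls_const c \<in> laurent_polys"
  unfolding LP_iff supp_def by (rule finite_subset[of _ "{0}"]) auto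
lemma LP_0[intro, simp]: "0 \<in> laurent_polys" using LP_const[of 0] by simp
lemma LP_1[intro, simp]: "1 \<in> laurent_polys" using LP_const[of 1] by simp
lemma LP_X[intro, simp]: "fls_X \<in> laurent_polys"
  unfolding LP_iff supp_def by (rule finite_subset[of _ "{1}"]) auto
lemma LP_Xi[intro, simp]: "fls_X_inv \<in> laurent_polys"
  unfolding LP_iff supp_def by (rule finite_subset[of _ "{-1}"]) auto
lemma LP_T[intro, simp]: "fls_X_intpow k \<in> laurent_polys"
  unfolding LP_iff supp_def by (rule finite_subset[of _ "{k}"]) auto
lemma LP_Phi[intro, simp]: "Phi \<in> laurent_polys" unfolding Phi_def by auto

lemma nth_const_T: "(fls_const c * fls_X_intpow k) $$ n = (if n = k then c else (0::rat))"
  by simp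

lemma bar_nth: assumes "f \<in> laurent_polys" shows "lp_bar f $$ n = f $$ (- n)"
proof -
  have fin: "finite (supp f)" using assms LP_iff by auto
  have "lp_bar f $$ n = (\<Sum>m\<in>supp f. (fls_const (f $$ m) * fls_X_intpow (- m)) $$ n)"
    unfolding lp_bar_def supp_def[symmetric] by (simp add: fls_nth_sum)
  also have "\<dots> = (\<Sum>m\<in>supp f. if m = - n then f $$ m else 0)"
    by (rule sum.cong) auto
  also have "\<dots> = f $$ (- n)" using fin by (auto simp: supp_def)
  finally show ?thesis .
qed

lemma supp_bar: "f \<in> laurent_polys \<Longrightarrow> supp (lp_bar f) = uminus ` supp f"
  by (auto simp: supp_def bar_nth image_iff intro!: exI[of _ "- _"])

lemma LP_bar[intro]: "f \<in> laurent_polys \<Longrightarrow> lp_bar f \<in> laurent_polys"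
  using supp_bar LP_iff by (metis finite_imageI)

lemma bar_bar[simp]: "f \<in> laurent_polys \<Longrightarrow> lp_bar (lp_bar f) = f"
  by (rule fls_eqI) (simp add: bar_nth LP_bar)

lemma bar_add: "f \<in> laurent_polys \<Longrightarrow> g \<in> laurent_polys \<Longrightarrow> lp_bar (f + g) = lp_bar f + lp_bar g"
  by (rule fls_eqI) (simp add: bar_nth LP_add)
lemma bar_uminus: "f \<in> laurent_polys \<Longrightarrow> lp_bar (- f) = - lp_bar f"
  by (rule fls_eqI) (simp add: bar_nth LP_uminus)
lemma bar_diff: "f \<in> laurent_polys \<Longrightarrow> g \<in> laurent_polys \<Longrightarrow> lp_bar (f - g) = lp_bar f - lp_bar g"
  by (rule fls_eqI) (simp add: bar_nth LP_diff)
lemma bar_const[simp]: "lp_bar (fls_const c) = fls_const c"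
  by (rule fls_eqI) (simp add: bar_nth)
lemma bar_0[simp]: "lp_bar 0 = 0" using bar_const[of 0] by simp
lemma bar_1[simp]: "lp_bar 1 = 1" using bar_const[of 1] by simp
lemma bar_X[simp]: "lp_bar fls_X = fls_X_inv"
  by (rule fls_eqI) (simp add: bar_nth)
lemma bar_Xi[simp]: "lp_bar fls_X_inv = fls_X"
  by (rule fls_eqI) (simp add: bar_nth)
lemma bar_T[simp]: "lp_bar (fls_X_intpow k) = fls_X_intpow (-k)"
  by (rule fls_eqI) (simp add: bar_nth)

lemma bar_mult: assumes f: "f \<in> laurent_polys" and g: "g \<in> laurent_polys"
  shows "lp_bar (f * g) = lp_bar f * lp_bar g"
proof (rule fls_eqI)
  fix n
  have "lp_bar (f * g) $$ n = (\<Sum>i\<in>supp f. f $$ i * g $$ (- n - i))"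
    using f g by (simp add: bar_nth LP_mult conv)
  also have "\<dots> = (\<Sum>j\<in>uminus ` supp f. f $$ (- j) * g $$ (j - n))"
  proof -
    have e: "\<And>x. - n - x = - x - n" by simp
    show ?thesis by (subst sum.reindex) (auto simp: inj_on_def e intro!: sum.cong)
  qed
  also have "\<dots> = (lp_bar f * lp_bar g) $$ n"
    using f g by (simp add: conv LP_bar supp_bar bar_nth)
  finally show "lp_bar (f * g) $$ n = (lp_bar f * lp_bar g) $$ n" .
qed

lemma bar_Phi[simp]: "lp_bar Phi = Phi"
  unfolding Phi_def by (simp add: bar_add LP_add algebra_simps)


lemma unit_iff: "u \<in> lp_units \<longleftrightarrow> u \<in> laurent_polys \<and> (\<exists>v\<in>laurent_polys. u * v = 1)"
  by (simp add: lp_units_def)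

lemma unit_LP: "u \<in> lp_units \<Longrightarrow> u \<in> laurent_polys" by (simp add: unit_iff)
lemma unit_mult: assumes "u \<in> lp_units" "v \<in> lp_units" shows "u * v \<in> lp_units"
proof -
  obtain a where a: "a \<in> laurent_polys" "u * a = 1" using assms(1) by (auto simp: unit_iff)
  obtain b where b: "b \<in> laurent_polys" "v * b = 1" using assms(2) by (auto simp: unit_iff)
  have "u * v * (a * b) = (u * a) * (v * b)" by (simp add: ac_simps)
  also have "\<dots> = 1" using a b by simp
  finally show ?thesis using assms a b by (auto simp: unit_iff intro!: bexI[of _ "a * b"] LP_mult)
qed
lemma unit_1[simp]: "1 \<in> lp_units" by (auto simp: unit_iff intro!: bexI[of _ 1])
lemma unit_const: "c \<noteq> 0 \<Longrightarrow> fls_const c \<in> lp_units"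
  by (auto simp: unit_iff intro!: bexI[of _ "fls_const (1/c)"])
lemma unit_nz: "u \<in> lp_units \<Longrightarrow> u \<noteq> 0" by (auto simp: unit_iff)
lemma unit_inv: assumes "u \<in> lp_units" shows "\<exists>v\<in>lp_units. v * u = 1"
proof -
  obtain a where a: "a \<in> laurent_polys" "u * a = 1" using assms(1) by (auto simp: unit_iff)
  have "a \<in> lp_units" using a assms by (auto simp: unit_iff mult.commute)
  then show ?thesis using a by (auto simp: mult.commute)
qed
lemma unit_T[simp]: "fls_X_intpow k \<in> lp_units"
  using fls_X_intpow_times_fls_X_intpow[of k "-k", where 'a=rat]
  by (auto simp: unit_iff intro!: bexI[of _ "fls_X_intpow (-k)"])

definition adj :: "mat2 \<Rightarrow> mat2" where
  "adj A = M2 (e22 A) (- e12 A) (- e21 A) (e11 A)"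

lemma mat2_eq: "A = B \<longleftrightarrow> e11 A = e11 B \<and> e12 A = e12 B \<and> e21 A = e21 B \<and> e22 A = e22 B"
  by (cases A; cases B) auto

lemma mult_assoc: "mat2_mult (mat2_mult A B) C = mat2_mult A (mat2_mult B C)"
  by (simp add: mat2_mult_def algebra_simps)
lemma mult_one_left[simp]: "mat2_mult mat2_one A = A"
  by (cases A) (simp add: mat2_mult_def mat2_one_def)
lemma mult_one_right[simp]: "mat2_mult A mat2_one = A"
  by (cases A) (simp add: mat2_mult_def mat2_one_def)
lemma det_mult: "mat2_det (mat2_mult A B) = mat2_det A * mat2_det B"
  by (simp add: mat2_mult_def mat2_det_def algebra_simps)
lemma smult_mult: "mat2_mult (mat2_smult c A) (mat2_smult d B) = mat2_smult (c * d) (mat2_mult A B)"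
  by (simp add: mat2_mult_def mat2_smult_def algebra_simps)
lemma smult_smult: "mat2_smult d (mat2_smult c A) = mat2_smult (d * c) A"
  by (simp add: mat2_smult_def algebra_simps)
lemma smult_1[simp]: "mat2_smult 1 A = A"
  by (cases A) (simp add: mat2_smult_def)
lemma det_smult: "mat2_det (mat2_smult c A) = c * c * mat2_det A"
  by (simp add: mat2_smult_def mat2_det_def algebra_simps)
lemma adj_right: "mat2_mult A (adj A) = mat2_smult (mat2_det A) mat2_one"
  by (simp add: mat2_mult_def adj_def mat2_smult_def mat2_det_def mat2_one_def algebra_simps)
lemma adj_left: "mat2_mult (adj A) A = mat2_smult (mat2_det A) mat2_one"
  by (simp add: mat2_mult_def adj_def mat2_smult_def mat2_det_def mat2_one_def algebra_simps)
lemma det_adj: "mat2_det (adj A) = mat2_det A"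
  by (simp add: adj_def mat2_det_def algebra_simps)
lemma det_one[simp]: "mat2_det mat2_one = 1"
  by (simp add: mat2_det_def mat2_one_def)


lemma GL2_iff: "A \<in> GL2 \<longleftrightarrow> e11 A \<in> laurent_polys \<and> e12 A \<in> laurent_polys \<and> e21 A \<in> laurent_polys
            \<and> e22 A \<in> laurent_polys \<and> mat2_det A \<in> lp_units"
  by (simp add: GL2_def)

lemma GL2_mult: "A \<in> GL2 \<Longrightarrow> B \<in> GL2 \<Longrightarrow> mat2_mult A B \<in> GL2"
  by (auto simp: GL2_iff det_mult unit_mult) (auto simp: mat2_mult_def)
lemma GL2_one[simp]: "mat2_one \<in> GL2"
  unfolding GL2_iff by (simp add: mat2_one_def mat2_det_def)
lemma GL2_smult: "A \<in> GL2 \<Longrightarrow> c \<in> lp_units \<Longrightarrow> mat2_smult c A \<in> GL2"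
  by (auto simp: GL2_iff det_smult unit_mult unit_LP) (auto simp: mat2_smult_def unit_LP)
lemma GL2_adj: "A \<in> GL2 \<Longrightarrow> adj A \<in> GL2"
  by (auto simp: GL2_iff det_adj) (auto simp: adj_def)

lemma class_self: "A \<in> GL2 \<Longrightarrow> A \<in> pgl_class A"
  by (auto simp: pgl_class_def intro!: bexI[of _ 1])

lemma class_smult: assumes "A \<in> GL2" "c \<in> lp_units"
  shows "pgl_class (mat2_smult c A) = pgl_class A"
proof -
  obtain v where v: "v \<in> lp_units" "v * c = 1" using unit_inv[OF assms(2)] by blast
  show ?thesis
  proof (rule subset_antisym; rule subsetI)
    fix B assume "B \<in> pgl_class (mat2_smult c A)"
    then obtain d where "B \<in> GL2" "d \<in> lp_units" "B = mat2_smult d (mat2_smult c A)"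
      by (auto simp: pgl_class_def)
    then show "B \<in> pgl_class A" using assms
      by (auto simp: pgl_class_def smult_smult intro!: bexI[of _ "d * c"] unit_mult)
  next
    fix B assume "B \<in> pgl_class A"
    then obtain d where "B \<in> GL2" "d \<in> lp_units" "B = mat2_smult d A"
      by (auto simp: pgl_class_def)
    moreover have "mat2_smult d A = mat2_smult (d * v) (mat2_smult c A)"
      using v by (simp add: smult_smult mult.assoc)
    ultimately show "B \<in> pgl_class (mat2_smult c A)" using v
      by (auto simp: pgl_class_def intro!: bexI[of _ "d * v"] unit_mult)
  qed
qed

lemma class_mem: assumes "B \<in> pgl_class A" "A \<in> GL2" shows "pgl_class B = pgl_class A"
proof -
  obtain c where "c \<in> lp_units" "B = mat2_smult c A" using assms(1) by (auto simp: pgl_class_def)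
  then show ?thesis using class_smult assms(2) by simp
qed

lemma class_eq_iff: assumes "A \<in> GL2" "B \<in> GL2"
  shows "pgl_class A = pgl_class B \<longleftrightarrow> A \<in> pgl_class B"
  using assms class_mem class_self by blast

lemma carrier_PGL2: "carrier PGL2 = pgl_class ` GL2"
  by (simp add: PGL2_def)
lemma one_PGL2: "one PGL2 = pgl_class mat2_one"
  by (simp add: PGL2_def)

lemma mult_PGL2: assumes "A \<in> GL2" "B \<in> GL2"
  shows "pgl_class A \<otimes>\<^bsub>PGL2\<^esub> pgl_class B = pgl_class (mat2_mult A B)"
proof -
  let ?A = "SOME A'. A' \<in> pgl_class A" and ?B = "SOME B'. B' \<in> pgl_class B"
  have "?A \<in> pgl_class A" using class_self[OF assms(1)] by (rule someI)
  then obtain c where c: "c \<in> lp_units" "?A = mat2_smult c A" by (auto simp: pgl_class_def)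
  have "?B \<in> pgl_class B" using class_self[OF assms(2)] by (rule someI)
  then obtain d where d: "d \<in> lp_units" "?B = mat2_smult d B" by (auto simp: pgl_class_def)
  have "pgl_class A \<otimes>\<^bsub>PGL2\<^esub> pgl_class B = pgl_class (mat2_mult ?A ?B)"
    by (simp add: PGL2_def)
  also have "\<dots> = pgl_class (mat2_smult (c * d) (mat2_mult A B))"
    by (simp add: c d smult_mult)
  also have "\<dots> = pgl_class (mat2_mult A B)"
    by (rule class_smult) (auto intro: GL2_mult assms unit_mult c d)
  finally show ?thesis .
qed

lemma group_PGL2: "group PGL2"
proof (rule groupI)
  fix x y assume "x \<in> carrier PGL2" "y \<in> carrier PGL2"
  then show "x \<otimes>\<^bsub>PGL2\<^esub> y \<in> carrier PGL2"
    by (auto simp: carrier_PGL2 mult_PGL2 GL2_mult)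
next
  show "one PGL2 \<in> carrier PGL2" by (simp add: carrier_PGL2 one_PGL2)
next
  fix x y z assume "x \<in> carrier PGL2" "y \<in> carrier PGL2" "z \<in> carrier PGL2"
  then show "x \<otimes>\<^bsub>PGL2\<^esub> y \<otimes>\<^bsub>PGL2\<^esub> z = x \<otimes>\<^bsub>PGL2\<^esub> (y \<otimes>\<^bsub>PGL2\<^esub> z)"
    by (auto simp: carrier_PGL2 mult_PGL2 GL2_mult mult_assoc)
next
  fix x assume "x \<in> carrier PGL2"
  then show "one PGL2 \<otimes>\<^bsub>PGL2\<^esub> x = x"
    by (auto simp: carrier_PGL2 mult_PGL2 one_PGL2)
next
  fix x assume "x \<in> carrier PGL2"
  then obtain A where A: "A \<in> GL2" "x = pgl_class A" by (auto simp: carrier_PGL2)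
  then have "pgl_class (adj A) \<otimes>\<^bsub>PGL2\<^esub> x = pgl_class (mat2_smult (mat2_det A) mat2_one)"
    by (simp add: mult_PGL2 GL2_adj adj_left)
  also have "\<dots> = one PGL2" using A by (simp add: class_smult[OF GL2_one] one_PGL2 GL2_iff)
  finally show "\<exists>y\<in>carrier PGL2. y \<otimes>\<^bsub>PGL2\<^esub> x = one PGL2"
    using A by (auto simp: carrier_PGL2 GL2_adj)
qed

interpretation P: group PGL2 by (rule group_PGL2)

lemma inv_PGL2: assumes "A \<in> GL2" shows "inv\<^bsub>PGL2\<^esub> (pgl_class A) = pgl_class (adj A)"
proof (rule P.inv_equality)
  have "pgl_class (adj A) \<otimes>\<^bsub>PGL2\<^esub> pgl_class A = pgl_class (mat2_smult (mat2_det A) mat2_one)"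
    using assms by (simp add: mult_PGL2 GL2_adj adj_left)
  also have "\<dots> = one PGL2" using assms by (simp add: class_smult[OF GL2_one] one_PGL2 GL2_iff)
  finally show "pgl_class (adj A) \<otimes>\<^bsub>PGL2\<^esub> pgl_class A = one PGL2" .
qed (auto simp: carrier_PGL2 assms GL2_adj)

lemma class_in_carrier[simp]: "A \<in> GL2 \<Longrightarrow> pgl_class A \<in> carrier PGL2"
  by (simp add: carrier_PGL2)

lemma class_one_imp: assumes "A \<in> GL2" "pgl_class A = pgl_class mat2_one"
  shows "\<exists>c\<in>lp_units. A = mat2_smult c mat2_one"
proof -
  have "A \<in> pgl_class mat2_one" using assms class_self by metis
  then show ?thesis by (auto simp: pgl_class_def)
qed


definition vge :: "rat fls \<Rightarrow> int \<Rightarrow> bool" where "vge f k \<longleftrightarrow> (\<forall>n<k. f $$ n = 0)"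
definition ex :: "rat fls \<Rightarrow> int \<Rightarrow> bool" where "ex f k \<longleftrightarrow> vge f k \<and> f $$ k \<noteq> 0"

lemma vge_add: "vge f k \<Longrightarrow> vge g k \<Longrightarrow> vge (f + g) k" by (simp add: vge_def)
lemma vge_diff: "vge f k \<Longrightarrow> vge g k \<Longrightarrow> vge (f - g) k" by (simp add: vge_def)
lemma vge_uminus: "vge f k \<Longrightarrow> vge (- f) k" by (simp add: vge_def)
lemma vge_const: "vge f k \<Longrightarrow> vge (fls_const c * f) k" by (simp add: vge_def)
lemma vge_X: "vge f k \<Longrightarrow> vge (fls_X * f) (k + 1)" by (simp add: vge_def)
lemma vge_Xi: "vge f k \<Longrightarrow> vge (fls_X_inv * f) (k - 1)" by (simp add: vge_def)
lemma vge_mono: "vge f k \<Longrightarrow> j \<le> k \<Longrightarrow> vge f j" by (simp add: vge_def)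
lemma vge_0[simp]: "vge 0 k" by (simp add: vge_def)
lemma ex_add: "ex f k \<Longrightarrow> vge g (k + 1) \<Longrightarrow> ex (f + g) k" by (simp add: ex_def vge_def)
lemma ex_Xi: "ex f k \<Longrightarrow> ex (fls_X_inv * f) (k - 1)" by (simp add: ex_def vge_def)
lemma ex_le: "ex f a \<Longrightarrow> vge f b \<Longrightarrow> b \<le> a"
  by (force simp: ex_def vge_def)
lemma ex_nz: "ex f k \<Longrightarrow> f \<noteq> 0" by (auto simp: ex_def)
lemma nz_ex: "f \<noteq> 0 \<Longrightarrow> ex f (fls_subdegree f)" by (simp add: ex_def vge_def)
lemma ex_subdeg: "ex f k \<Longrightarrow> fls_subdegree f = k"
  by (rule fls_subdegree_eqI) (auto simp: ex_def vge_def)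
lemma vge_iff: "vge f k \<longleftrightarrow> f = 0 \<or> k \<le> fls_subdegree f"
proof
  assume "vge f k" then show "f = 0 \<or> k \<le> fls_subdegree f"
    using ex_le[OF nz_ex] by blast
qed (auto simp: vge_def)

lemma vge_mult: "vge f a \<Longrightarrow> vge g b \<Longrightarrow> vge (f * g) (a + b)"
  by (cases "f = 0"; cases "g = 0") (auto simp: vge_iff)
lemma vge_cmult: "vge g 0 \<Longrightarrow> vge f k \<Longrightarrow> vge (g * f) k"
  using vge_mult[of g 0 f k] by simp
lemma vge_c0[simp]: "vge (fls_const r) 0" "vge 1 0" "vge fls_X 0" by (auto simp: vge_def)
lemma ex_mult: assumes "ex f a" "ex g b" shows "ex (f * g) (a + b)"
proof -
  have "f \<noteq> 0" "g \<noteq> 0" using assms ex_nz by auto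
  then have "f * g \<noteq> 0" by simp
  moreover have "fls_subdegree (f * g) = a + b" using assms \<open>f \<noteq> 0\<close> \<open>g \<noteq> 0\<close> ex_subdeg by simp
  ultimately show ?thesis using nz_ex by metis
qed

definition mvec :: "mat2 \<Rightarrow> rat fls \<times> rat fls \<Rightarrow> rat fls \<times> rat fls" where
  "mvec A v = (e11 A * fst v + e12 A * snd v, e21 A * fst v + e22 A * snd v)"

lemma mvec_mult: "mvec (mat2_mult A B) v = mvec A (mvec B v)"
  by (simp add: mvec_def mat2_mult_def algebra_simps)
lemma mvec_scal: "mvec (mat2_smult u mat2_one) v = (u * fst v, u * snd v)"
  by (simp add: mvec_def mat2_smult_def mat2_one_def)

definition Kp :: "rat \<Rightarrow> rat fls \<times> rat fls \<Rightarrow> bool" where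
  "Kp r v \<longleftrightarrow> (\<exists>k. ex (snd v) k \<and> vge (fst v - fls_const r * (fls_X * snd v)) (k + 2))"
definition Km :: "rat \<Rightarrow> rat fls \<times> rat fls \<Rightarrow> bool" where
  "Km r v \<longleftrightarrow> (\<exists>k. ex (fst v) k \<and> vge (snd v - fls_const r * fst v) (k + 1))"

lemma XXi: "fls_X * fls_X_inv = (1::rat fls)"
  by (simp add: fls_X_times_conv_shift)

lemma const_sq: "fls_const (r^2) = fls_const r * (fls_const r :: rat fls)"
  by (simp add: power2_eq_square)

lemma g_mat_eq: "g_mat r = M2 (fls_X - fls_const r * fls_const r) (fls_const r)
   (- fls_const r * (1 + fls_X_inv + fls_X)) (fls_X_inv - fls_const r * fls_const r)"
  by (simp add: g_mat_def const_sq)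

lemma ping_plus:
  assumes nz: "v \<noteq> (0, 0)" and nK: "\<not> Km r v"
  shows "Kp r (mvec (g_mat r) v)"
proof -
  obtain x y where v: "v = (x, y)" by (cases v)
  define c where "c = (fls_const r :: rat fls)"
  define e where "e = y - c * x"
  have "\<exists>b. ex e b \<and> vge x b"
  proof (cases "x = 0")
    case True
    then have "y \<noteq> 0" using nz v by auto
    then show ?thesis using True by (auto simp: e_def intro: nz_ex)
  next
    case False
    have xa: "ex x (fls_subdegree x)" using False by (rule nz_ex)
    then have "\<not> vge e (fls_subdegree x + 1)" using nK by (auto simp: Km_def v e_def c_def)
    then have "e \<noteq> 0" by auto
    then have "ex e (fls_subdegree e)" by (rule nz_ex)
    moreover have "fls_subdegree e \<le> fls_subdegree x"
      using \<open>\<not> vge e (fls_subdegree x + 1)\<close> vge_iff by fastforce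
    ultimately show ?thesis using xa by (auto simp: ex_def intro: vge_mono)
  qed
  then obtain b where eb: "ex e b" and xb: "vge x b" by blast
  define Y where "Y = - c * (1 + fls_X_inv + fls_X) * x + (fls_X_inv - c * c) * y"
  define X' where "X' = (fls_X - c * c) * x + c * y"
  have mv: "mvec (g_mat r) v = (X', Y)" by (simp add: mvec_def g_mat_eq v X'_def Y_def c_def)
  have Yeq: "Y = fls_X_inv * e + (- (c * x) - c * (fls_X * x) - c * (c * e) - c * (c * (c * x)))"
    by (simp add: Y_def e_def algebra_simps)
  have eb1: "vge e b" using eb by (simp add: ex_def)
  have "vge (- (c * x) - c * (fls_X * x) - c * (c * e) - c * (c * (c * x))) (b - 1 + 1)"
    unfolding c_def using xb eb1
    by (intro vge_diff vge_uminus vge_const) (auto intro: vge_mono vge_X)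
  then have Yb: "ex Y (b - 1)" unfolding Yeq by (intro ex_add ex_Xi eb)
  have Xeq: "X' - c * (fls_X * Y) = fls_X * ((1 + c * c + c * c * c * c) * x + c * c * (fls_X * x) + c * c * c * e)"
    unfolding X'_def Yeq e_def using XXi by algebra
  have "vge ((1 + c * c + c * c * c * c) * x + c * c * (fls_X * x) + c * c * c * e) b"
  proof -
    have "vge c 0" by (simp add: c_def)
    then show ?thesis using xb eb1
      by (intro vge_add vge_cmult) (auto intro: vge_mono vge_X)
  qed
  then have "vge (X' - c * (fls_X * Y)) (b - 1 + 2)"
    unfolding Xeq using vge_X[of _ b] by (simp add: add.commute)
  then show ?thesis using Yb by (auto simp: Kp_def mv c_def)
qed

lemma ping_minus:
  assumes nz: "v \<noteq> (0, 0)" and nK: "\<not> Kp r v"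
  shows "Km r (mvec (adj (g_mat r)) v)"
proof -
  obtain x y where v: "v = (x, y)" by (cases v)
  define c where "c = (fls_const r :: rat fls)"
  define d where "d = x - c * (fls_X * y)"
  have "\<exists>b. ex d b \<and> vge y (b - 1)"
  proof (cases "y = 0")
    case True
    then have "x \<noteq> 0" using nz v by auto
    then show ?thesis using True by (auto simp: d_def intro: nz_ex)
  next
    case False
    have ya: "ex y (fls_subdegree y)" using False by (rule nz_ex)
    then have "\<not> vge d (fls_subdegree y + 2)" using nK by (auto simp: Kp_def v d_def c_def)
    then have "d \<noteq> 0" by auto
    then have "ex d (fls_subdegree d)" by (rule nz_ex)
    moreover have "fls_subdegree d \<le> fls_subdegree y + 1"
      using \<open>\<not> vge d (fls_subdegree y + 2)\<close> vge_iff by fastforce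
    ultimately show ?thesis using ya
      by (intro exI[of _ "fls_subdegree d"]) (auto simp: ex_def intro: vge_mono)
  qed
  then obtain b where db: "ex d b" and yb: "vge y (b - 1)" by blast
  have db1: "vge d b" using db by (simp add: ex_def)
  define X' where "X' = (fls_X_inv - c * c) * x + (- c) * y"
  define Y where "Y = (- (- c * (1 + fls_X_inv + fls_X))) * x + (fls_X - c * c) * y"
  have mv: "mvec (adj (g_mat r)) v = (X', Y)"
    by (simp add: mvec_def g_mat_eq adj_def v X'_def Y_def c_def)
  have Xeq: "X' = fls_X_inv * d + (- (c * c * d) - c * c * c * (fls_X * y))"
    unfolding X'_def d_def using XXi by algebra
  have "vge c 0" by (simp add: c_def)
  have "vge (fls_X * y) b" using vge_X[OF yb] by simp
  have "vge (- (c * c * d) - c * c * c * (fls_X * y)) (b - 1 + 1)"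
  proof -
    obtain Z where Z: "Z = fls_X * y" by simp
    have "vge (- (c * c * d) - c * c * c * Z) b"
      using db1 \<open>vge c 0\<close> \<open>vge (fls_X * y) b\<close> unfolding Z[symmetric]
      by - (intro vge_diff vge_uminus vge_cmult, simp_all add: db1 \<open>vge c 0\<close> Z)
    then show ?thesis using Z by simp
  qed
  then have Xb: "ex X' (b - 1)" unfolding Xeq by (intro ex_add ex_Xi db)
  have Yeq: "Y - c * X' = c * (1 + fls_X + c * c) * d + c * c * fls_X * (1 + fls_X + c * c) * y + fls_X * y"
    unfolding X'_def Y_def d_def by (simp add: algebra_simps)
  have "vge (c * (1 + fls_X + c * c) * d + c * c * fls_X * (1 + fls_X + c * c) * y + fls_X * y) b"
  proof -
    have "vge (1 + fls_X + c * c) 0" using \<open>vge c 0\<close>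
      by (intro vge_add vge_cmult) auto
    obtain Z where Z: "Z = fls_X * y" by simp
    have "vge (c * (1 + fls_X + c * c) * d + c * c * (1 + fls_X + c * c) * Z + Z) b"
      using db1 \<open>vge c 0\<close> \<open>vge (fls_X * y) b\<close> \<open>vge (1 + fls_X + c * c) 0\<close>
      unfolding Z[symmetric]
      by - (intro vge_add vge_cmult, simp_all add: db1 \<open>vge c 0\<close> Z)
    moreover have eq: "c * c * fls_X * (1 + fls_X + c * c) * y = c * c * (1 + fls_X + c * c) * (fls_X * y)"
      by (simp add: ac_simps)
    ultimately show ?thesis unfolding Z eq by simp
  qed
  then have "vge (Y - c * X') (b - 1 + 1)" unfolding Yeq by simp
  then show ?thesis using Xb by (auto simp: Km_def mv c_def)
qed


definition KK :: "rat \<times> bool \<Rightarrow> rat fls \<times> rat fls \<Rightarrow> bool" where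
  "KK l = (if snd l then Kp (fst l) else Km (fst l))"
definition lmat :: "rat \<times> bool \<Rightarrow> mat2" where
  "lmat l = (if snd l then g_mat (fst l) else adj (g_mat (fst l)))"
definition linv :: "rat \<times> bool \<Rightarrow> rat \<times> bool" where
  "linv l = (fst l, \<not> snd l)"

lemma Kp_nz: "Kp r v \<Longrightarrow> v \<noteq> (0, 0)"
  by (auto simp: Kp_def ex_def)
lemma Km_nz: "Km r v \<Longrightarrow> v \<noteq> (0, 0)"
  by (auto simp: Km_def ex_def)
lemma KK_nz: "KK l v \<Longrightarrow> v \<noteq> (0, 0)"
  by (auto simp: KK_def Kp_nz Km_nz split: if_splits)

lemma step: "v \<noteq> (0, 0) \<Longrightarrow> \<not> KK (linv l) v \<Longrightarrow> KK l (mvec (lmat l) v)"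
  by (cases l) (auto simp: KK_def lmat_def linv_def ping_plus ping_minus)

lemma vge_X_c: "vge y k \<Longrightarrow> vge (fls_const r * (fls_X * y)) (k + 1)"
  by (intro vge_const vge_X)

lemma disj_pm: assumes "Kp r v" "Km s v" shows False
proof -
  obtain x y where v: "v = (x, y)" by (cases v)
  obtain k where k: "ex y k" "vge (x - fls_const r * (fls_X * y)) (k + 2)"
    using assms(1) by (auto simp: Kp_def v)
  obtain a where a: "ex x a" "vge (y - fls_const s * x) (a + 1)"
    using assms(2) by (auto simp: Km_def v)
  have "vge (fls_const r * (fls_X * y)) (k + 1)" using k(1) by (intro vge_X_c) (simp add: ex_def)
  moreover have "vge (x - fls_const r * (fls_X * y)) (k + 1)" using k(2) by (rule vge_mono) simp
  ultimately have "vge x (k + 1)" using vge_add by fastforce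
  then have "k + 1 \<le> a" using a(1) ex_le by blast
  have "vge (fls_const s * x) (k + 1)" using \<open>vge x (k + 1)\<close> by (rule vge_const)
  moreover have "vge (y - fls_const s * x) (k + 1)" using vge_mono[OF a(2), of "k + 1"] \<open>k + 1 \<le> a\<close> by simp
  ultimately have "vge y (k + 1)" using vge_add by fastforce
  then show False using k(1) ex_le by fastforce
qed

lemma disj_pp: assumes "Kp r v" "Kp s v" "r \<noteq> s" shows False
proof -
  obtain x y where v: "v = (x, y)" by (cases v)
  obtain k where k: "ex y k" "vge (x - fls_const r * (fls_X * y)) (k + 2)"
    using assms(1) by (auto simp: Kp_def v)
  obtain j where j: "ex y j" "vge (x - fls_const s * (fls_X * y)) (j + 2)"
    using assms(2) by (auto simp: Kp_def v)
  have "j = k" using j(1) k(1) by (metis ex_subdeg)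
  have j2: "vge (x - fls_const s * (fls_X * y)) (k + 2)" using j(2) \<open>j = k\<close> by simp
  have "vge ((x - fls_const r * (fls_X * y)) - (x - fls_const s * (fls_X * y))) (k + 2)"
    by (rule vge_diff[OF k(2) j2])
  moreover have "(x - fls_const r * (fls_X * y)) - (x - fls_const s * (fls_X * y)) = fls_X * (fls_const (s - r) * y)"
    by (simp add: algebra_simps flip: fls_minus_const)
  ultimately have "vge (fls_X * (fls_const (s - r) * y)) (k + 2)" by simp
  then have "(fls_X * (fls_const (s - r) * y)) $$ (k + 1) = 0" unfolding vge_def by (meson less_add_one add_less_cancel_left one_less_numeral_iff semiring_norm(76))
  then show False using k(1) assms(3) by (simp add: ex_def)
qed

lemma disj_mm: assumes "Km r v" "Km s v" "r \<noteq> s" shows False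
proof -
  obtain x y where v: "v = (x, y)" by (cases v)
  obtain k where k: "ex x k" "vge (y - fls_const r * x) (k + 1)"
    using assms(1) by (auto simp: Km_def v)
  obtain j where j: "ex x j" "vge (y - fls_const s * x) (j + 1)"
    using assms(2) by (auto simp: Km_def v)
  have "j = k" using j(1) k(1) by (metis ex_subdeg)
  have j2: "vge (y - fls_const s * x) (k + 1)" using j(2) \<open>j = k\<close> by simp
  have "vge ((y - fls_const r * x) - (y - fls_const s * x)) (k + 1)"
    by (rule vge_diff[OF k(2) j2])
  moreover have "(y - fls_const r * x) - (y - fls_const s * x) = fls_const (s - r) * x"
    by (simp add: algebra_simps flip: fls_minus_const)
  ultimately have "vge (fls_const (s - r) * x) (k + 1)" by simp
  then have "(fls_const (s - r) * x) $$ k = 0" by (simp add: vge_def)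
  then show False using k(1) assms(3) by (simp add: ex_def)
qed

lemma disj: "l \<noteq> l' \<Longrightarrow> KK l v \<Longrightarrow> KK l' v \<Longrightarrow> False"
  by (cases l; cases l') (auto simp: KK_def split: if_splits dest: disj_pm disj_pp disj_mm)

lemma scale: assumes "a \<noteq> 0" "KK l (p, q)" shows "KK l (a * p, a * q)"
proof -
  have ea: "ex a (fls_subdegree a)" using assms(1) by (rule nz_ex)
  have va: "vge a (fls_subdegree a)" using ea by (simp add: ex_def)
  show ?thesis
  proof (cases "snd l")
    case True
    then obtain k where k: "ex q k" "vge (p - fls_const (fst l) * (fls_X * q)) (k + 2)"
      using assms(2) by (auto simp: KK_def Kp_def)
    have "a * p - fls_const (fst l) * (fls_X * (a * q)) = a * (p - fls_const (fst l) * (fls_X * q))"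
      by (simp add: algebra_simps)
    then have "vge (a * p - fls_const (fst l) * (fls_X * (a * q))) (fls_subdegree a + k + 2)"
      using vge_mult[OF va k(2)] by (simp add: add.assoc)
    moreover have "ex (a * q) (fls_subdegree a + k)" using ex_mult[OF ea k(1)] .
    ultimately show ?thesis using True by (auto simp: KK_def Kp_def)
  next
    case False
    then obtain k where k: "ex p k" "vge (q - fls_const (fst l) * p) (k + 1)"
      using assms(2) by (auto simp: KK_def Km_def)
    have "a * q - fls_const (fst l) * (a * p) = a * (q - fls_const (fst l) * p)"
      by (simp add: algebra_simps)
    then have "vge (a * q - fls_const (fst l) * (a * p)) (fls_subdegree a + k + 1)"
      using vge_mult[OF va k(2)] by (simp add: add.assoc)
    moreover have "ex (a * p) (fls_subdegree a + k)" using ex_mult[OF ea k(1)] .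
    ultimately show ?thesis using False by (auto simp: KK_def Km_def)
  qed
qed

lemma test_vec: "KK l (1, fls_const s) \<Longrightarrow> \<not> snd l \<and> s = fst l"
proof -
  assume K: "KK l (1, fls_const s)"
  show ?thesis
  proof (cases "snd l")
    case True
    then obtain k where k: "ex (fls_const s) k" "vge (1 - fls_const (fst l) * (fls_X * fls_const s)) (k + 2)"
      using K by (auto simp: KK_def Kp_def)
    have "k = 0" using k(1) by (auto simp: ex_def split: if_splits)
    then have "(1 - fls_const (fst l) * (fls_X * fls_const s)) $$ 0 = 0"
      using k(2) unfolding vge_def by (metis add_0 zero_less_numeral)
    then show ?thesis by simp
  next
    case False
    then obtain k where k: "ex 1 k" "vge (fls_const s - fls_const (fst l) * 1) (k + 1)"
      using K by (auto simp: KK_def Km_def)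
    have "k = 0" using k(1) by (auto simp: ex_def split: if_splits)
    then have "(fls_const s - fls_const (fst l) * 1) $$ 0 = 0"
      using k(2) unfolding vge_def by (metis add_0 zero_less_one)
    then show ?thesis using False by simp
  qed
qed

lemma det_g: "mat2_det (g_mat r) = fls_const (1 + r^2 + r^4)"
proof -
  define c where "c = (fls_const r :: rat fls)"
  have "fls_const (1 + r^2 + r^4) = 1 + c * c + c * c * c * c"
    by (simp add: c_def power2_eq_square power4_eq_xxxx fls_plus_const[symmetric])
  moreover have "mat2_det (g_mat r) = 1 + c * c + c * c * c * c"
    unfolding mat2_det_def g_mat_eq c_def[symmetric] using XXi by simp algebra
  ultimately show ?thesis by simp
qed

lemma GL2_g: "g_mat r \<in> GL2"
proof -
  have "1 + r^2 + r^4 > 0" by (simp add: add_pos_nonneg)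
  then have "mat2_det (g_mat r) \<in> lp_units" unfolding det_g by (intro unit_const) simp
  then show ?thesis unfolding GL2_iff by (auto simp: g_mat_def intro!: LP_mult LP_uminus LP_add LP_diff)
qed

lemma GL2_lmat: "lmat l \<in> GL2"
  by (simp add: lmat_def GL2_g GL2_adj)

fun wmat :: "(rat \<times> bool) list \<Rightarrow> mat2" where
  "wmat [] = mat2_one"
| "wmat (l # w) = mat2_mult (lmat l) (wmat w)"

lemma GL2_wmat: "wmat w \<in> GL2"
  by (induction w) (auto intro: GL2_mult GL2_lmat)

lemma word_eval_wmat: "word_eval PGL2 elem_gen w = pgl_class (wmat w)"
proof (induction w)
  case Nil then show ?case by (simp add: one_PGL2)
next
  case (Cons l w)
  obtain r b where l: "l = (r, b)" by (cases l)
  have "(if b then elem_gen r else inv\<^bsub>PGL2\<^esub> (elem_gen r)) = pgl_class (lmat l)"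
    by (simp add: l elem_gen_def lmat_def inv_PGL2 GL2_g)
  then show ?case using Cons by (simp add: l mult_PGL2 GL2_lmat GL2_wmat)
qed

lemma pingpong:
  "reduced_word w \<Longrightarrow> w \<noteq> [] \<Longrightarrow> v \<noteq> (0, 0) \<Longrightarrow> \<not> KK (linv (last w)) v
    \<Longrightarrow> KK (hd w) (mvec (wmat w) v)"
proof (induction w rule: reduced_word.induct)
  case (1 i b j c w)
  let ?w = "(j, c) # w"
  have IH: "KK (j, c) (mvec (wmat ?w) v)" using 1 by simp
  have "(j, c) \<noteq> linv (i, b)" using "1.prems"(1) by (auto simp: linv_def)
  then have "\<not> KK (linv (i, b)) (mvec (wmat ?w) v)" using IH disj by blast
  then have "KK (i, b) (mvec (lmat (i, b)) (mvec (wmat ?w) v))"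
    using step KK_nz IH by blast
  then show ?case by (simp add: mvec_mult)
next
  case ("2_1") then show ?case by simp
next
  case ("2_2" l)
  have "mvec mat2_one v = v" by (simp add: mvec_def mat2_one_def)
  then show ?case using "2_2" by (simp add: step mvec_mult)
qed

lemma freeness: "w \<noteq> [] \<Longrightarrow> reduced_word w \<Longrightarrow> word_eval PGL2 elem_gen w \<noteq> \<one>\<^bsub>PGL2\<^esub>"
proof
  assume w: "w \<noteq> []" "reduced_word w" and eq: "word_eval PGL2 elem_gen w = \<one>\<^bsub>PGL2\<^esub>"
  define s where "s = \<bar>fst (hd w)\<bar> + \<bar>fst (last w)\<bar> + 1"
  have s1: "s \<noteq> fst (hd w)" "s \<noteq> fst (last w)" unfolding s_def by linarith+
  define v where "v = (1 :: rat fls, fls_const s)"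
  have "\<not> KK (linv (last w)) v" using test_vec s1 by (auto simp: v_def linv_def)
  then have K: "KK (hd w) (mvec (wmat w) v)" using pingpong w by (simp add: v_def)
  have "pgl_class (wmat w) = pgl_class mat2_one" using eq by (simp add: word_eval_wmat one_PGL2)
  then obtain u where u: "u \<in> lp_units" "wmat w = mat2_smult u mat2_one"
    using class_one_imp GL2_wmat by blast
  obtain u' where u': "u' \<in> lp_units" "u' * u = 1" using unit_inv[OF u(1)] by blast
  have "KK (hd w) (u * 1, u * fls_const s)" using K by (simp add: u mvec_scal v_def)
  then have "KK (hd w) (u' * (u * 1), u' * (u * fls_const s))" using scale unit_nz[OF u'(1)] by blast
  then have "KK (hd w) (1, fls_const s)" using u'(2) by (simp add: mult.assoc[symmetric])
  then show False using test_vec s1 by blast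
qed


definition vle :: "rat fls \<Rightarrow> int \<Rightarrow> bool" where "vle f k \<longleftrightarrow> (\<forall>n>k. f $$ n = 0)"

lemma vle_mult: assumes "f \<in> laurent_polys" "vle f a" "vle g b" shows "vle (f * g) (a + b)"
  unfolding vle_def
proof (intro allI impI)
  fix n assume n: "n > a + b"
  have "(f * g) $$ n = (\<Sum>i\<in>supp f. f $$ i * g $$ (n - i))" using conv[OF assms(1)] .
  also have "\<dots> = 0"
  proof (rule sum.neutral, rule ballI)
    fix i assume "i \<in> supp f"
    then have "i \<le> a" using assms(2) by (force simp: vle_def supp_def)
    then have "g $$ (n - i) = 0" using assms(3) n by (simp add: vle_def)
    then show "f $$ i * g $$ (n - i) = 0" by simp
  qed
  finally show "(f * g) $$ n = 0" .
qed

lemma top_coeff: assumes "f \<in> laurent_polys" "vle f a" "vle g b"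
  shows "(f * g) $$ (a + b) = f $$ a * g $$ b"
proof -
  have fin: "finite (supp f)" using assms(1) LP_iff by auto
  have "(f * g) $$ (a + b) = (\<Sum>i\<in>supp f. f $$ i * g $$ (a + b - i))" using conv[OF assms(1)] .
  also have "\<dots> = (\<Sum>i\<in>supp f. if i = a then f $$ a * g $$ b else 0)"
  proof (rule sum.cong, simp)
    fix i assume "i \<in> supp f"
    then have "i \<le> a" using assms(2) by (force simp: vle_def supp_def)
    then show "f $$ i * g $$ (a + b - i) = (if i = a then f $$ a * g $$ b else 0)"
      using assms(3) by (auto simp: vle_def)
  qed
  also have "\<dots> = f $$ a * g $$ b" using fin by (auto simp: supp_def)
  finally show ?thesis .
qed

lemma bot_coeff: assumes "f \<in> laurent_polys" "vge f a" "vge g b"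
  shows "(f * g) $$ (a + b) = f $$ a * g $$ b"
proof -
  have fin: "finite (supp f)" using assms(1) LP_iff by auto
  have "(f * g) $$ (a + b) = (\<Sum>i\<in>supp f. f $$ i * g $$ (a + b - i))" using conv[OF assms(1)] .
  also have "\<dots> = (\<Sum>i\<in>supp f. if i = a then f $$ a * g $$ b else 0)"
  proof (rule sum.cong, simp)
    fix i assume "i \<in> supp f"
    then have "a \<le> i" using assms(2) by (force simp: vge_def supp_def)
    then show "f $$ i * g $$ (a + b - i) = (if i = a then f $$ a * g $$ b else 0)"
      using assms(3) by (auto simp: vge_def)
  qed
  also have "\<dots> = f $$ a * g $$ b" using fin by (auto simp: supp_def)
  finally show ?thesis .
qed

lemma vle_bar: "f \<in> laurent_polys \<Longrightarrow> vle (lp_bar f) k \<longleftrightarrow> vge f (- k)"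
  by (auto simp: vle_def vge_def bar_nth) (metis minus_less_iff minus_minus)
lemma vge_bar: "f \<in> laurent_polys \<Longrightarrow> vge (lp_bar f) k \<longleftrightarrow> vle f (- k)"
  by (auto simp: vle_def vge_def bar_nth) (metis minus_less_iff minus_minus)

lemma has_top: assumes "f \<in> laurent_polys" "f \<noteq> 0" shows "\<exists>M. vle f M \<and> f $$ M \<noteq> 0"
proof -
  have fin: "finite (supp f)" using assms(1) LP_iff by auto
  have ne: "supp f \<noteq> {}" using assms(2) by (auto simp: supp_def fls_eq_iff)
  show ?thesis using Max_in[OF fin ne] Max_ge[OF fin]
    by (intro exI[of _ "Max (supp f)"]) (force simp: vle_def supp_def)
qed

lemma has_bot: assumes "f \<noteq> 0" shows "\<exists>m. vge f m \<and> f $$ m \<noteq> 0"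
  using nz_ex[OF assms] by (auto simp: ex_def)

lemma vle_ge: "vle f M \<Longrightarrow> f $$ m \<noteq> 0 \<Longrightarrow> m \<le> M"
  by (force simp: vle_def)
lemma vge_le: "vge f m \<Longrightarrow> f $$ M \<noteq> 0 \<Longrightarrow> m \<le> M"
  by (force simp: vge_def)

lemma unit_mono: assumes "u \<in> lp_units" shows "\<exists>a. \<forall>n. n \<noteq> a \<longrightarrow> u $$ n = 0"
proof -
  obtain v where v: "v \<in> laurent_polys" "u * v = 1" using assms by (auto simp: unit_iff)
  have u: "u \<in> laurent_polys" "u \<noteq> 0" using assms unit_LP unit_nz by auto
  have "v \<noteq> 0" using v by auto
  obtain a where a: "vge u a" "u $$ a \<noteq> 0" using has_bot u by blast
  obtain b where b: "vge v b" "v $$ b \<noteq> 0" using has_bot \<open>v \<noteq> 0\<close> by blast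
  obtain A where A: "vle u A" "u $$ A \<noteq> 0" using has_top u by blast
  obtain B where B: "vle v B" "v $$ B \<noteq> 0" using has_top v \<open>v \<noteq> 0\<close> by blast
  have "(u * v) $$ (a + b) \<noteq> 0" using bot_coeff[OF u(1) a(1) b(1)] a b by simp
  then have ab: "a + b = 0" using v(2) by (auto split: if_splits)
  have "(u * v) $$ (A + B) \<noteq> 0" using top_coeff[OF u(1) A(1) B(1)] A B by simp
  then have AB: "A + B = 0" using v(2) by (auto split: if_splits)
  have "a \<le> A" using vge_le[OF a(1) A(2)] .
  have "b \<le> B" using vge_le[OF b(1) B(2)] .
  then have "A = a" using ab AB \<open>a \<le> A\<close> by linarith
  show ?thesis
  proof (intro exI allI impI)
    fix n assume "n \<noteq> a"
    then show "u $$ n = 0" using a(1) A(1) \<open>A = a\<close>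
      by (cases "n < a") (auto simp: vge_def vle_def)
  qed
qed


lemmas LPs = LP_mult LP_add LP_diff LP_uminus LP_bar LP_const LP_X LP_Xi LP_T LP_Phi LP_0 LP_1

lemma quat_mult:
  assumes "a1 \<in> laurent_polys" "a2 \<in> laurent_polys" "b1 \<in> laurent_polys" "b2 \<in> laurent_polys"
  shows "mat2_mult (quat_mat a1 a2) (quat_mat b1 b2) =
    quat_mat (a1 * b1 - Phi * a2 * lp_bar b2) (a1 * b2 + a2 * lp_bar b1)"
  using assms
  by (simp add: mat2_mult_def quat_mat_def bar_add bar_diff bar_mult LPs algebra_simps)

lemma quat_det: "mat2_det (quat_mat g1 g2) = g1 * lp_bar g1 + Phi * g2 * lp_bar g2"
  by (simp add: mat2_det_def quat_mat_def algebra_simps)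

lemma quat_adj: assumes "g1 \<in> laurent_polys" "g2 \<in> laurent_polys"
  shows "adj (quat_mat g1 g2) = quat_mat (lp_bar g1) (- g2)"
  using assms by (simp add: adj_def quat_mat_def bar_uminus)

lemma quat_GL2: assumes "g1 \<in> laurent_polys" "g2 \<in> laurent_polys"
  shows "quat_mat g1 g2 \<in> GL2 \<longleftrightarrow> g1 * lp_bar g1 + Phi * g2 * lp_bar g2 \<in> lp_units"
  using assms by (simp add: GL2_iff quat_det[symmetric] LPs) (simp add: quat_mat_def LPs)

lemma g_quat: "g_mat r = quat_mat (fls_X - fls_const r * fls_const r) (fls_const r)"
  by (simp add: g_mat_eq quat_mat_def Phi_def bar_diff LPs) (simp add: algebra_simps)

lemma adj_g_quat: "adj (g_mat r) = quat_mat (fls_X_inv - fls_const r * fls_const r) (- fls_const r)"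
  by (simp add: g_quat quat_adj LPs bar_diff)

definition Sm :: "int \<Rightarrow> mat2" where
  "Sm k = quat_mat (fls_X_intpow k) 0"

lemma Sm_eq: "Sm k = M2 (fls_X_intpow k) 0 0 (fls_X_intpow (-k))"
  by (simp add: Sm_def quat_mat_def)

lemma shift1_nth[simp]: "(fls_shift j 1 * f) $$ n = (f :: rat fls) $$ (n + j)"
  by (simp add: fls_shifted_times_simps)

lemma T_mult: "fls_X_intpow i * fls_X_intpow j = (fls_X_intpow (i + j) :: rat fls)"
  by (rule fls_eqI) simp
lemma T_inv: "fls_X_intpow k * fls_X_intpow (- k) = (1 :: rat fls)"
  by (rule fls_eqI) simp
lemma X_Tk: "fls_X * fls_X_intpow k = (fls_X_intpow (k + 1) :: rat fls)"
  by (rule fls_eqI) simp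
lemma Xi_Tk: "fls_X_inv * fls_X_intpow (- k) = (fls_X_intpow (- (k + 1)) :: rat fls)"
  by (rule fls_eqI) simp
lemma Xi_Tk': "fls_X_inv * fls_X_intpow k = (fls_X_intpow (k - 1) :: rat fls)"
  by (rule fls_eqI) simp
lemma X_Tk': "fls_X * fls_X_intpow (- k) = (fls_X_intpow (- (k - 1)) :: rat fls)"
  by (rule fls_eqI) simp

lemma GL2_Sm: "Sm k \<in> GL2"
proof -
  have "mat2_det (Sm k) = 1" unfolding Sm_eq mat2_det_def using T_inv by simp
  moreover have "fls_X_intpow (- k) \<in> laurent_polys" by (rule LP_T)
  ultimately show ?thesis unfolding GL2_iff Sm_eq by simp
qed

lemma X_T: "fls_X = (fls_X_intpow 1 :: rat fls)"
  by (simp add: fls_X_conv_shift_1)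
lemma Xi_T: "fls_X_inv = (fls_X_intpow (-1) :: rat fls)"
  by (simp add: fls_X_inv_conv_shift_1)

lemma g0: "g_mat 0 = M2 fls_X 0 0 fls_X_inv" by (simp add: g_mat_def)

lemma Sm_succ: "Sm (k + 1) = mat2_mult (g_mat 0) (Sm k)"
  unfolding Sm_eq g0 mat2_mult_def using X_Tk[of k] Xi_Tk[of k] by simp
lemma Sm_pred: "Sm (k - 1) = mat2_mult (adj (g_mat 0)) (Sm k)"
  unfolding Sm_eq g0 adj_def mat2_mult_def using X_Tk'[of k] Xi_Tk'[of k] by simp

definition QG :: "mat2 set set" where "QG = generate PGL2 (range elem_gen)"

lemma range_sub: "range elem_gen \<subseteq> carrier PGL2"
  by (auto simp: elem_gen_def GL2_g)

lemma QG_mult: "x \<in> QG \<Longrightarrow> y \<in> QG \<Longrightarrow> x \<otimes>\<^bsub>PGL2\<^esub> y \<in> QG"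
  by (simp add: QG_def generate.eng)
lemma QG_inv: "x \<in> QG \<Longrightarrow> inv\<^bsub>PGL2\<^esub> x \<in> QG"
  using P.generate_m_inv_closed[OF range_sub] by (simp add: QG_def)
lemma QG_gen: "elem_gen r \<in> QG"
  by (simp add: QG_def generate.incl)
lemma QG_one: "\<one>\<^bsub>PGL2\<^esub> \<in> QG"
  by (simp add: QG_def generate.one)
lemma QG_carrier: "x \<in> QG \<Longrightarrow> x \<in> carrier PGL2"
  using P.generate_incl[OF range_sub] by (auto simp: QG_def)

lemma QG_lmat: "pgl_class (lmat l) \<in> QG"
proof (cases "snd l")
  case True then show ?thesis by (simp add: lmat_def QG_gen flip: elem_gen_def)
next
  case False
  then have "pgl_class (lmat l) = inv\<^bsub>PGL2\<^esub> (elem_gen (fst l))"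
    by (simp add: lmat_def elem_gen_def inv_PGL2 GL2_g)
  then show ?thesis by (simp add: QG_inv QG_gen)
qed

lemma QG_Sm: "pgl_class (Sm k) \<in> QG"
proof (induction k rule: int_induct[where k = 0])
  case base
  have "Sm 0 = mat2_one" by (simp add: Sm_eq mat2_one_def)
  then show ?case using QG_one by (simp add: one_PGL2)
next
  case (step1 i)
  have "pgl_class (Sm (i + 1)) = pgl_class (g_mat 0) \<otimes>\<^bsub>PGL2\<^esub> pgl_class (Sm i)"
    by (simp add: Sm_succ mult_PGL2 GL2_g GL2_Sm)
  then show ?case using step1 QG_mult QG_lmat[of "(0, True)"] by (simp add: lmat_def)
next
  case (step2 i)
  have "pgl_class (Sm (i - 1)) = pgl_class (adj (g_mat 0)) \<otimes>\<^bsub>PGL2\<^esub> pgl_class (Sm i)"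
    by (simp add: Sm_pred mult_PGL2 GL2_g GL2_Sm GL2_adj)
  then show ?case using step2 QG_mult QG_lmat[of "(0, False)"] by (simp add: lmat_def)
qed


lemma Q_char: "X \<in> quaternionic_group \<longleftrightarrow>
  (\<exists>g1 g2. g1 \<in> laurent_polys \<and> g2 \<in> laurent_polys \<and> quat_mat g1 g2 \<in> GL2 \<and> X = pgl_class (quat_mat g1 g2))"
proof
  assume "X \<in> quaternionic_group"
  then obtain A g1 g2 where A: "A \<in> GL2" "X = pgl_class A" and g: "g1 \<in> laurent_polys" "g2 \<in> laurent_polys"
    "quat_mat g1 g2 \<in> X"
    by (auto simp: quaternionic_group_def carrier_PGL2)
  have "quat_mat g1 g2 \<in> GL2" using g(3) A by (auto simp: pgl_class_def)
  moreover have "X = pgl_class (quat_mat g1 g2)" using class_mem[of _ A] g(3) A by metis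
  ultimately show "\<exists>g1 g2. g1 \<in> laurent_polys \<and> g2 \<in> laurent_polys \<and> quat_mat g1 g2 \<in> GL2 \<and> X = pgl_class (quat_mat g1 g2)"
    using g by blast
next
  assume "\<exists>g1 g2. g1 \<in> laurent_polys \<and> g2 \<in> laurent_polys \<and> quat_mat g1 g2 \<in> GL2 \<and> X = pgl_class (quat_mat g1 g2)"
  then show "X \<in> quaternionic_group"
    by (auto simp: quaternionic_group_def carrier_PGL2 intro: class_self)
qed

lemma Q_subgroup: "subgroup quaternionic_group PGL2"
proof
  show "quaternionic_group \<subseteq> carrier PGL2" by (auto simp: quaternionic_group_def)
next
  fix x y assume "x \<in> quaternionic_group" "y \<in> quaternionic_group"
  then obtain a1 a2 b1 b2 where a: "a1 \<in> laurent_polys" "a2 \<in> laurent_polys" "quat_mat a1 a2 \<in> GL2"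
      "x = pgl_class (quat_mat a1 a2)"
    and b: "b1 \<in> laurent_polys" "b2 \<in> laurent_polys" "quat_mat b1 b2 \<in> GL2" "y = pgl_class (quat_mat b1 b2)"
    unfolding Q_char by blast
  have "x \<otimes>\<^bsub>PGL2\<^esub> y = pgl_class (mat2_mult (quat_mat a1 a2) (quat_mat b1 b2))"
    using a b by (simp add: mult_PGL2)
  moreover have "mat2_mult (quat_mat a1 a2) (quat_mat b1 b2) \<in> GL2" using a b by (simp add: GL2_mult)
  moreover have "a1 * b1 - Phi * a2 * lp_bar b2 \<in> laurent_polys" "a1 * b2 + a2 * lp_bar b1 \<in> laurent_polys"
    using a b by (simp_all add: LPs)
  ultimately show "x \<otimes>\<^bsub>PGL2\<^esub> y \<in> quaternionic_group"
    unfolding Q_char using a b by (auto simp: quat_mult)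
next
  have "mat2_one = quat_mat 1 0" by (simp add: mat2_one_def quat_mat_def)
  then show "\<one>\<^bsub>PGL2\<^esub> \<in> quaternionic_group"
    unfolding Q_char one_PGL2 using GL2_one LP_0 LP_1 by (intro exI[of _ 1] exI[of _ 0]) simp
next
  fix x assume "x \<in> quaternionic_group"
  then obtain a1 a2 where a: "a1 \<in> laurent_polys" "a2 \<in> laurent_polys" "quat_mat a1 a2 \<in> GL2"
      "x = pgl_class (quat_mat a1 a2)"
    unfolding Q_char by blast
  have "inv\<^bsub>PGL2\<^esub> x = pgl_class (quat_mat (lp_bar a1) (- a2))"
    using a by (simp add: inv_PGL2 quat_adj)
  moreover have "quat_mat (lp_bar a1) (- a2) \<in> GL2" using a GL2_adj quat_adj by metis
  moreover have "lp_bar a1 \<in> laurent_polys" "- a2 \<in> laurent_polys" using a by (simp_all add: LPs)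
  ultimately show "inv\<^bsub>PGL2\<^esub> x \<in> quaternionic_group" unfolding Q_char by blast
qed

lemma gen_sub_Q: "QG \<subseteq> quaternionic_group"
  unfolding QG_def
proof (rule P.generate_subgroup_incl[OF _ Q_subgroup])
  show "range elem_gen \<subseteq> quaternionic_group"
  proof
    fix X assume "X \<in> range elem_gen"
    then obtain r where r: "X = elem_gen r" by auto
    have "fls_X - fls_const r * fls_const r \<in> laurent_polys" by (simp add: LPs)
    then show "X \<in> quaternionic_group"
      unfolding Q_char r elem_gen_def g_quat using GL2_g[unfolded g_quat] LP_const by blast
  qed
qed

lemma N_const: assumes g: "g1 \<in> laurent_polys" "g2 \<in> laurent_polys" "quat_mat g1 g2 \<in> GL2"
  shows "\<forall>n. n \<noteq> 0 \<longrightarrow> (g1 * lp_bar g1 + Phi * g2 * lp_bar g2) $$ n = 0"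
    and "g1 * lp_bar g1 + Phi * g2 * lp_bar g2 \<noteq> 0"
proof -
  let ?N = "g1 * lp_bar g1 + Phi * g2 * lp_bar g2"
  have U: "?N \<in> lp_units" using g quat_GL2 by blast
  then show nz: "?N \<noteq> 0" by (rule unit_nz)
  obtain a where a: "\<forall>n. n \<noteq> a \<longrightarrow> ?N $$ n = 0" using unit_mono[OF U] by blast
  have Na: "?N $$ a \<noteq> 0" using nz a by (metis fls_eqI fls_zero_nth)
  have NL: "?N \<in> laurent_polys" using g by (intro LPs)
  have "lp_bar ?N = lp_bar g1 * g1 + Phi * lp_bar g2 * g2"
    using g by (simp add: bar_add bar_mult LPs)
  also have "\<dots> = ?N" by (simp add: algebra_simps)
  finally have sym: "lp_bar ?N = ?N" .
  have "?N $$ (- a) = ?N $$ a" using bar_nth[OF NL, of "- a"] sym by simp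
  then have "- a = a" using a Na by metis
  then have "a = 0" by simp
  then show "\<forall>n. n \<noteq> 0 \<longrightarrow> ?N $$ n = 0" using a by simp
qed


lemma vle_Phi: "vle Phi 1" and Phi_1: "Phi $$ 1 = 1"
  by (auto simp: vle_def Phi_def)

lemma prod_top: assumes "f \<in> laurent_polys" "vge f m" "vle f M"
  shows "vle (f * lp_bar f) (M - m)" "(f * lp_bar f) $$ (M - m) = f $$ M * f $$ m"
proof -
  have b: "vle (lp_bar f) (- m)" using assms by (simp add: vle_bar)
  show "vle (f * lp_bar f) (M - m)" using vle_mult[OF assms(1) assms(3) b] by simp
  show "(f * lp_bar f) $$ (M - m) = f $$ M * f $$ m"
    using top_coeff[OF assms(1) assms(3) b] assms(1) by (simp add: bar_nth)
qed

lemma B_top: assumes "f \<in> laurent_polys" "vge f m" "vle f M"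
  shows "vle (Phi * f * lp_bar f) (M - m + 1)" "(Phi * f * lp_bar f) $$ (M - m + 1) = f $$ M * f $$ m"
proof -
  have e: "Phi * f * lp_bar f = Phi * (f * lp_bar f)" by (simp add: mult.assoc)
  show "vle (Phi * f * lp_bar f) (M - m + 1)"
    unfolding e using vle_mult[OF LP_Phi vle_Phi prod_top(1)[OF assms]] by (simp add: add.commute)
  show "(Phi * f * lp_bar f) $$ (M - m + 1) = f $$ M * f $$ m"
    unfolding e using top_coeff[OF LP_Phi vle_Phi prod_top(1)[OF assms]] prod_top(2)[OF assms] Phi_1
    by (simp add: add.commute)
qed

lemma vle_nth: "vle f k \<Longrightarrow> k < n \<Longrightarrow> f $$ n = 0" by (simp add: vle_def)
lemma vge_nth: "vge f k \<Longrightarrow> n < k \<Longrightarrow> f $$ n = 0" by (simp add: vge_def)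

lemma shape_nz: assumes g: "g1 \<in> laurent_polys" "g2 \<in> laurent_polys" "quat_mat g1 g2 \<in> GL2"
  shows "g1 \<noteq> 0"
proof
  assume g10: "g1 = 0"
  note N = N_const[OF g]
  show False
  proof (cases "g2 = 0")
    case True then show False using N(2) g10 by simp
  next
    case False
    obtain mb where mb: "vge g2 mb" "g2 $$ mb \<noteq> 0" using has_bot False by blast
    obtain Mb where Mb: "vle g2 Mb" "g2 $$ Mb \<noteq> 0" using has_top g(2) False by blast
    have "mb \<le> Mb" using vge_le[OF mb(1) Mb(2)] .
    have "(g1 * lp_bar g1 + Phi * g2 * lp_bar g2) $$ (Mb - mb + 1) = g2 $$ Mb * g2 $$ mb"
      using B_top(2)[OF g(2) mb(1) Mb(1)] g10 by simp
    moreover have "Mb - mb + 1 \<noteq> 0" using \<open>mb \<le> Mb\<close> by simp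
    ultimately show False using N(1) Mb(2) mb(2) by fastforce
  qed
qed

lemma shape0: assumes g: "g1 \<in> laurent_polys" "g2 \<in> laurent_polys" "quat_mat g1 g2 \<in> GL2"
  and ma: "vge g1 ma" "g1 $$ ma \<noteq> 0" and Ma: "vle g1 Ma" "g1 $$ Ma \<noteq> 0" and "g2 = 0"
  shows "Ma = ma"
proof (rule ccontr)
  assume ne: "Ma \<noteq> ma"
  have "ma \<le> Ma" using vge_le[OF ma(1) Ma(2)] .
  note N = N_const[OF g]
  have "(g1 * lp_bar g1 + Phi * g2 * lp_bar g2) $$ (Ma - ma) = g1 $$ Ma * g1 $$ ma"
    using prod_top(2)[OF g(1) ma(1) Ma(1)] \<open>g2 = 0\<close> by simp
  then show False using N(1) ne Ma(2) ma(2) by fastforce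
qed

lemma shape1: assumes g: "g1 \<in> laurent_polys" "g2 \<in> laurent_polys" "quat_mat g1 g2 \<in> GL2"
  and ma: "vge g1 ma" "g1 $$ ma \<noteq> 0" and Ma: "vle g1 Ma" "g1 $$ Ma \<noteq> 0"
  and mb: "vge g2 mb" "g2 $$ mb \<noteq> 0" and Mb: "vle g2 Mb" "g2 $$ Mb \<noteq> 0"
  shows "Ma - ma = Mb - mb + 1" "g1 $$ Ma * g1 $$ ma + g2 $$ Mb * g2 $$ mb = 0"
proof -
  have "ma \<le> Ma" using vge_le[OF ma(1) Ma(2)] .
  have "mb \<le> Mb" using vge_le[OF mb(1) Mb(2)] .
  note N = N_const[OF g]
  let ?A = "g1 * lp_bar g1" and ?B = "Phi * g2 * lp_bar g2"
  note A = prod_top[OF g(1) ma(1) Ma(1)]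
  note B = B_top[OF g(2) mb(1) Mb(1)]
  have aa: "g1 $$ Ma * g1 $$ ma \<noteq> 0" using Ma ma by simp
  have bb: "g2 $$ Mb * g2 $$ mb \<noteq> 0" using Mb mb by simp
  show P: "Ma - ma = Mb - mb + 1"
  proof (rule ccontr)
    assume "Ma - ma \<noteq> Mb - mb + 1"
    then consider "Ma - ma > Mb - mb + 1" | "Ma - ma < Mb - mb + 1" by linarith
    then show False
    proof cases
      case 1
      have "?B $$ (Ma - ma) = 0" using vle_nth[OF B(1) 1] .
      then have "(?A + ?B) $$ (Ma - ma) \<noteq> 0" using A(2) aa by simp
      moreover have "Ma - ma \<noteq> 0" using 1 \<open>mb \<le> Mb\<close> by linarith
      ultimately show False using N(1) by blast
    next
      case 2
      have "?A $$ (Mb - mb + 1) = 0" using vle_nth[OF A(1) 2] .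
      then have "(?A + ?B) $$ (Mb - mb + 1) \<noteq> 0" using B(2) bb by simp
      moreover have "Mb - mb + 1 \<noteq> 0" using \<open>mb \<le> Mb\<close> by linarith
      ultimately show False using N(1) by blast
    qed
  qed
  have "(?A + ?B) $$ (Ma - ma) = g1 $$ Ma * g1 $$ ma + g2 $$ Mb * g2 $$ mb"
    using A(2) B(2) P by simp
  moreover have "Ma - ma \<noteq> 0" using P \<open>mb \<le> Mb\<close> by linarith
  ultimately show "g1 $$ Ma * g1 $$ ma + g2 $$ Mb * g2 $$ mb = 0" using N(1) by metis
qed


lemma even_supp:
  fixes a b h :: "int \<Rightarrow> rat"
  assumes za: "\<And>i. i < ma \<Longrightarrow> a i = 0" "\<And>i. i > Ma \<Longrightarrow> a i = 0"
    and zb: "\<And>i. i < mb \<Longrightarrow> b i = 0" "\<And>i. i > Mb \<Longrightarrow> b i = 0"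
    and P: "Ma - ma = Mb - mb + 1" and K: "2 * k = - (ma + Mb)"
    and rel: "a Ma * a ma + b Mb * b mb = 0" and aM: "a Ma \<noteq> 0" and r: "r = b mb / a Ma"
    and h: "\<And>n. h n = a (n + 1 - k) - r * r * a (n - k) + r * (b (- n - 1 - k) + b (- n - k) + b (- n + 1 - k))"
    and nz: "h n \<noteq> 0"
  shows "ma + k \<le> n \<and> n \<le> Ma + k - 1"
proof (rule ccontr)
  assume "\<not> (ma + k \<le> n \<and> n \<le> Ma + k - 1)"
  then consider "n < ma + k - 1" | "n = ma + k - 1" | "n = Ma + k" | "n > Ma + k" by linarith
  then show False
  proof cases
    case 1
    have "a (n + 1 - k) = 0" "a (n - k) = 0" by (rule za(1), use 1 in linarith)+
    moreover have "b (- n - 1 - k) = 0" "b (- n - k) = 0" "b (- n + 1 - k) = 0"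
      by (rule zb(2), use 1 K in linarith)+
    ultimately show False using nz h by simp
  next
    case 2
    have "a (n - k) = 0" by (rule za(1)) (use 2 in linarith)
    moreover have "b (- n - k) = 0" "b (- n + 1 - k) = 0" by (rule zb(2), use 2 K in linarith)+
    moreover have "n + 1 - k = ma" "- n - 1 - k = Mb" using 2 K by linarith+
    ultimately have "h n = a ma + r * b Mb" using h by simp
    also have "\<dots> = (a Ma * a ma + b Mb * b mb) / a Ma" using aM r by (simp add: field_simps)
    also have "\<dots> = 0" using rel by simp
    finally show False using nz by simp
  next
    case 3
    have "a (n + 1 - k) = 0" by (rule za(2)) (use 3 in linarith)
    moreover have "b (- n - 1 - k) = 0" "b (- n - k) = 0" by (rule zb(1), use 3 K P in linarith)+
    moreover have "n - k = Ma" "- n + 1 - k = mb" using 3 K P by linarith+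
    ultimately have "h n = - r * r * a Ma + r * b mb" using h by simp
    also have "\<dots> = 0" using aM r by (simp add: field_simps)
    finally show False using nz by simp
  next
    case 4
    have "a (n + 1 - k) = 0" "a (n - k) = 0" by (rule za(2), use 4 in linarith)+
    moreover have "b (- n - 1 - k) = 0" "b (- n - k) = 0" "b (- n + 1 - k) = 0"
      by (rule zb(1), use 4 K P in linarith)+
    ultimately show False using nz h by simp
  qed
qed

lemma odd_supp:
  fixes a b h :: "int \<Rightarrow> rat"
  assumes za: "\<And>i. i < ma \<Longrightarrow> a i = 0" "\<And>i. i > Ma \<Longrightarrow> a i = 0"
    and zb: "\<And>i. i < mb \<Longrightarrow> b i = 0" "\<And>i. i > Mb \<Longrightarrow> b i = 0"
    and P: "Ma - ma = Mb - mb + 1" and K: "2 * k = - (ma + Mb + 1)"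
    and rel: "a Ma * a ma + b Mb * b mb = 0" and bm: "b mb \<noteq> 0" and r: "r = a Ma / b mb"
    and h: "\<And>n. h n = a (n - 1 - k) - r * r * a (n - k) - r * (b (- n - 1 - k) + b (- n - k) + b (- n + 1 - k))"
    and nz: "h n \<noteq> 0"
  shows "ma + k + 1 \<le> n \<and> n \<le> Ma + k"
proof (rule ccontr)
  assume "\<not> (ma + k + 1 \<le> n \<and> n \<le> Ma + k)"
  then consider "n < ma + k" | "n = ma + k" | "n = Ma + k + 1" | "n > Ma + k + 1" by linarith
  then show False
  proof cases
    case 1
    have "a (n - 1 - k) = 0" "a (n - k) = 0" by (rule za(1), use 1 in linarith)+
    moreover have "b (- n - 1 - k) = 0" "b (- n - k) = 0" "b (- n + 1 - k) = 0"
      by (rule zb(2), use 1 K in linarith)+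
    ultimately show False using nz h by simp
  next
    case 2
    have "a (n - 1 - k) = 0" by (rule za(1)) (use 2 in linarith)
    moreover have "b (- n - k) = 0" "b (- n + 1 - k) = 0" by (rule zb(2), use 2 K in linarith)+
    moreover have "n - k = ma" "- n - 1 - k = Mb" using 2 K by linarith+
    ultimately have "h n = - r * r * a ma - r * b Mb" using h by simp
    also have "\<dots> = - r * (r * a ma + b Mb)" by (simp add: algebra_simps)
    also have "r * a ma + b Mb = (a Ma * a ma + b Mb * b mb) / b mb" using bm r by (simp add: field_simps)
    also have "\<dots> = 0" using rel by simp
    finally show False using nz by simp
  next
    case 3
    have "a (n - k) = 0" by (rule za(2)) (use 3 in linarith)
    moreover have "b (- n - 1 - k) = 0" "b (- n - k) = 0" by (rule zb(1), use 3 K P in linarith)+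
    moreover have "n - 1 - k = Ma" "- n + 1 - k = mb" using 3 K P by linarith+
    ultimately have "h n = a Ma - r * b mb" using h by simp
    also have "\<dots> = 0" using bm r by (simp add: field_simps)
    finally show False using nz by simp
  next
    case 4
    have "a (n - 1 - k) = 0" "a (n - k) = 0" by (rule za(2), use 4 in linarith)+
    moreover have "b (- n - 1 - k) = 0" "b (- n - k) = 0" "b (- n + 1 - k) = 0"
      by (rule zb(1), use 4 K P in linarith)+
    ultimately show False using nz h by simp
  qed
qed


lemma SmQ: assumes "g1 \<in> laurent_polys" "g2 \<in> laurent_polys"
  shows "mat2_mult (Sm k) (quat_mat g1 g2) = quat_mat (fls_X_intpow k * g1) (fls_X_intpow k * g2)"
  using assms by (simp add: Sm_def quat_mult LPs)

lemma step_red: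
  assumes g: "g1 \<in> laurent_polys" "g2 \<in> laurent_polys" "quat_mat g1 g2 \<in> GL2"
  and ma: "vge g1 ma" "g1 $$ ma \<noteq> 0" and Ma: "vle g1 Ma" "g1 $$ Ma \<noteq> 0"
  and mb: "vge g2 mb" "g2 $$ mb \<noteq> 0" and Mb: "vle g2 Mb" "g2 $$ Mb \<noteq> 0"
  shows "\<exists>l k h1 h2 m'. mat2_mult (lmat l) (mat2_mult (Sm k) (quat_mat g1 g2)) = quat_mat h1 h2
     \<and> h1 \<in> laurent_polys \<and> h2 \<in> laurent_polys \<and> (\<forall>n. h1 $$ n \<noteq> 0 \<longrightarrow> m' \<le> n \<and> n \<le> m' + (Ma - ma) - 1)"
proof -
  note sh = shape1[OF g ma Ma mb Mb]
  have za: "\<And>i. i < ma \<Longrightarrow> g1 $$ i = 0" "\<And>i. i > Ma \<Longrightarrow> g1 $$ i = 0"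
    using ma(1) Ma(1) by (auto simp: vge_def vle_def)
  have zb: "\<And>i. i < mb \<Longrightarrow> g2 $$ i = 0" "\<And>i. i > Mb \<Longrightarrow> g2 $$ i = 0"
    using mb(1) Mb(1) by (auto simp: vge_def vle_def)
  have barT: "\<And>k. lp_bar (fls_X_intpow k * g2) = fls_X_intpow (- k) * lp_bar g2"
    using g by (simp add: bar_mult)
  show ?thesis
  proof (cases "even (ma + Mb)")
    case True
    define k where "k = - ((ma + Mb) div 2)"
    have K: "2 * k = - (ma + Mb)" using True unfolding k_def by auto
    define r where "r = g2 $$ mb / g1 $$ Ma"
    define c where "c = (fls_const r :: rat fls)"
    define h1 where "h1 = (fls_X_inv - c * c) * (fls_X_intpow k * g1) - Phi * (- c) * lp_bar (fls_X_intpow k * g2)"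
    define h2 where "h2 = (fls_X_inv - c * c) * (fls_X_intpow k * g2) + (- c) * lp_bar (fls_X_intpow k * g1)"
    have prod: "mat2_mult (lmat (r, False)) (mat2_mult (Sm k) (quat_mat g1 g2)) = quat_mat h1 h2"
      using g by (simp add: lmat_def adj_g_quat SmQ quat_mult LPs h1_def h2_def c_def)
    have LPh: "h1 \<in> laurent_polys" "h2 \<in> laurent_polys" using g by (simp_all add: h1_def h2_def c_def LPs)
    have h1e: "h1 = fls_X_inv * (fls_X_intpow k * g1) - c * c * (fls_X_intpow k * g1)
       + c * (fls_X_inv * (fls_X_intpow (- k) * lp_bar g2)) + c * (fls_X_intpow (- k) * lp_bar g2)
       + c * (fls_X * (fls_X_intpow (- k) * lp_bar g2))"
      unfolding h1_def barT by (simp add: Phi_def algebra_simps)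
    have hform: "\<And>n. h1 $$ n = g1 $$ (n + 1 - k) - r * r * g1 $$ (n - k)
       + r * (g2 $$ (- n - 1 - k) + g2 $$ (- n - k) + g2 $$ (- n + 1 - k))"
      unfolding h1e c_def using g(2) by (simp add: bar_nth; simp add: algebra_simps)
    have "\<forall>n. h1 $$ n \<noteq> 0 \<longrightarrow> ma + k \<le> n \<and> n \<le> ma + k + (Ma - ma) - 1"
    proof (intro allI impI)
      fix n assume "h1 $$ n \<noteq> 0"
      from even_supp[of ma "fls_nth g1" Ma mb "fls_nth g2" Mb k r "fls_nth h1", OF za zb sh(1) K sh(2) Ma(2) r_def hform this]
      show "ma + k \<le> n \<and> n \<le> ma + k + (Ma - ma) - 1" by simp
    qed
    then show ?thesis using prod LPh by blast
  next
    case False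
    define k where "k = - ((ma + Mb + 1) div 2)"
    have "even (ma + Mb + 1)" using False by simp
    then have K: "2 * k = - (ma + Mb + 1)" using even_two_times_div_two unfolding k_def by fastforce
    define r where "r = g1 $$ Ma / g2 $$ mb"
    define c where "c = (fls_const r :: rat fls)"
    define h1 where "h1 = (fls_X - c * c) * (fls_X_intpow k * g1) - Phi * c * lp_bar (fls_X_intpow k * g2)"
    define h2 where "h2 = (fls_X - c * c) * (fls_X_intpow k * g2) + c * lp_bar (fls_X_intpow k * g1)"
    have prod: "mat2_mult (lmat (r, True)) (mat2_mult (Sm k) (quat_mat g1 g2)) = quat_mat h1 h2"
      using g by (simp add: lmat_def g_quat SmQ quat_mult LPs h1_def h2_def c_def)
    have LPh: "h1 \<in> laurent_polys" "h2 \<in> laurent_polys" using g by (simp_all add: h1_def h2_def c_def LPs)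
    have h1e: "h1 = fls_X * (fls_X_intpow k * g1) - c * c * (fls_X_intpow k * g1)
       - c * (fls_X_inv * (fls_X_intpow (- k) * lp_bar g2)) - c * (fls_X_intpow (- k) * lp_bar g2)
       - c * (fls_X * (fls_X_intpow (- k) * lp_bar g2))"
      unfolding h1_def barT by (simp add: Phi_def algebra_simps)
    have hform: "\<And>n. h1 $$ n = g1 $$ (n - 1 - k) - r * r * g1 $$ (n - k)
       - r * (g2 $$ (- n - 1 - k) + g2 $$ (- n - k) + g2 $$ (- n + 1 - k))"
      unfolding h1e c_def using g(2) by (simp add: bar_nth; simp add: algebra_simps)
    have "\<forall>n. h1 $$ n \<noteq> 0 \<longrightarrow> ma + k + 1 \<le> n \<and> n \<le> ma + k + 1 + (Ma - ma) - 1"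
    proof (intro allI impI)
      fix n assume "h1 $$ n \<noteq> 0"
      from odd_supp[of ma "fls_nth g1" Ma mb "fls_nth g2" Mb k r "fls_nth h1", OF za zb sh(1) K sh(2) mb(2) r_def hform this]
      show "ma + k + 1 \<le> n \<and> n \<le> ma + k + 1 + (Ma - ma) - 1" by simp
    qed
    then show ?thesis using prod LPh by blast
  qed
qed


lemma descent:
  "\<forall>g1 g2 m. g1 \<in> laurent_polys \<longrightarrow> g2 \<in> laurent_polys \<longrightarrow> quat_mat g1 g2 \<in> GL2 \<longrightarrow>
     (\<forall>i. g1 $$ i \<noteq> 0 \<longrightarrow> m \<le> i \<and> i \<le> m + int n) \<longrightarrow> pgl_class (quat_mat g1 g2) \<in> QG"
proof (induction n rule: less_induct)
  case (less n)
  show ?case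
  proof (intro allI impI)
    fix g1 g2 m
    assume g: "g1 \<in> laurent_polys" "g2 \<in> laurent_polys" "quat_mat g1 g2 \<in> GL2"
      and sp: "\<forall>i. g1 $$ i \<noteq> 0 \<longrightarrow> m \<le> i \<and> i \<le> m + int n"
    have nz: "g1 \<noteq> 0" using shape_nz[OF g] .
    obtain ma where ma: "vge g1 ma" "g1 $$ ma \<noteq> 0" using has_bot nz by blast
    obtain Ma where Ma: "vle g1 Ma" "g1 $$ Ma \<noteq> 0" using has_top g(1) nz by blast
    have "m \<le> ma" "Ma \<le> m + int n" using sp ma(2) Ma(2) by auto
    show "pgl_class (quat_mat g1 g2) \<in> QG"
    proof (cases "g2 = 0")
      case True
      have "Ma = ma" using shape0[OF g ma Ma True] .
      define a where "a = g1 $$ ma"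
      have g1e: "g1 = fls_const a * fls_X_intpow ma"
      proof (rule fls_eqI)
        fix j
        show "g1 $$ j = (fls_const a * fls_X_intpow ma) $$ j"
        proof (cases "j = ma")
          case False
          then have "g1 $$ j = 0" using ma(1) Ma(1) \<open>Ma = ma\<close>
            by (cases "j < ma") (auto simp: vge_def vle_def)
          then show ?thesis using False by simp
        qed (simp add: a_def)
      qed
      have "quat_mat g1 g2 = mat2_smult (fls_const a) (Sm ma)"
        using True by (simp add: quat_mat_def g1e Sm_eq mat2_smult_def bar_mult LPs)
      moreover have "fls_const a \<in> lp_units" using ma(2) by (simp add: a_def unit_const)
      ultimately have "pgl_class (quat_mat g1 g2) = pgl_class (Sm ma)"
        using class_smult GL2_Sm by simp
      then show ?thesis using QG_Sm by simp
    next
      case False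
      obtain mb where mb: "vge g2 mb" "g2 $$ mb \<noteq> 0" using has_bot False by blast
      obtain Mb where Mb: "vle g2 Mb" "g2 $$ Mb \<noteq> 0" using has_top g(2) False by blast
      have "mb \<le> Mb" using vge_le[OF mb(1) Mb(2)] .
      have P: "Ma - ma = Mb - mb + 1" using shape1(1)[OF g ma Ma mb Mb] .
      obtain l k h1 h2 m' where
        red: "mat2_mult (lmat l) (mat2_mult (Sm k) (quat_mat g1 g2)) = quat_mat h1 h2"
        and h: "h1 \<in> laurent_polys" "h2 \<in> laurent_polys"
        and hs: "\<forall>j. h1 $$ j \<noteq> 0 \<longrightarrow> m' \<le> j \<and> j \<le> m' + (Ma - ma) - 1"
        using step_red[OF g ma Ma mb Mb] by blast
      have GLh: "quat_mat h1 h2 \<in> GL2" unfolding red[symmetric]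
        by (intro GL2_mult GL2_lmat GL2_Sm g(3))
      define n' where "n' = nat (Ma - ma - 1)"
      have "n' < n" using P \<open>mb \<le> Mb\<close> \<open>m \<le> ma\<close> \<open>Ma \<le> m + int n\<close> unfolding n'_def by linarith
      moreover have "\<forall>j. h1 $$ j \<noteq> 0 \<longrightarrow> m' \<le> j \<and> j \<le> m' + int n'"
        using hs P \<open>mb \<le> Mb\<close> unfolding n'_def by auto
      ultimately have Y: "pgl_class (quat_mat h1 h2) \<in> QG" using less h GLh by blast
      let ?L = "pgl_class (lmat l)" and ?S = "pgl_class (Sm k)" and ?X = "pgl_class (quat_mat g1 g2)"
      have cL: "?L \<in> carrier PGL2" "?S \<in> carrier PGL2" "?X \<in> carrier PGL2"
        using GL2_lmat GL2_Sm g(3) by auto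
      have "pgl_class (quat_mat h1 h2) = ?L \<otimes>\<^bsub>PGL2\<^esub> (?S \<otimes>\<^bsub>PGL2\<^esub> ?X)"
        unfolding red[symmetric] by (simp add: mult_PGL2 GL2_lmat GL2_Sm g(3) GL2_mult)
      also have "\<dots> = (?L \<otimes>\<^bsub>PGL2\<^esub> ?S) \<otimes>\<^bsub>PGL2\<^esub> ?X" using cL by (simp add: P.m_assoc)
      finally have "?X = inv\<^bsub>PGL2\<^esub> (?L \<otimes>\<^bsub>PGL2\<^esub> ?S) \<otimes>\<^bsub>PGL2\<^esub> pgl_class (quat_mat h1 h2)"
        using cL by (subst P.inv_solve_left) (auto intro: GL2_Sm GL2_mult)
      moreover have "inv\<^bsub>PGL2\<^esub> (?L \<otimes>\<^bsub>PGL2\<^esub> ?S) \<in> QG"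
        by (intro QG_inv QG_mult QG_lmat QG_Sm)
      ultimately show ?thesis using Y QG_mult by simp
    qed
  qed
qed

lemma Q_sub_gen: "quaternionic_group \<subseteq> QG"
proof
  fix X assume "X \<in> quaternionic_group"
  then obtain g1 g2 where g: "g1 \<in> laurent_polys" "g2 \<in> laurent_polys" "quat_mat g1 g2 \<in> GL2"
    and X: "X = pgl_class (quat_mat g1 g2)" unfolding Q_char by blast
  have nz: "g1 \<noteq> 0" using shape_nz[OF g] .
  obtain ma where ma: "vge g1 ma" "g1 $$ ma \<noteq> 0" using has_bot nz by blast
  obtain Ma where Ma: "vle g1 Ma" "g1 $$ Ma \<noteq> 0" using has_top g(1) nz by blast
  have "ma \<le> Ma" using vge_le[OF ma(1) Ma(2)] .
  have "\<forall>i. g1 $$ i \<noteq> 0 \<longrightarrow> ma \<le> i \<and> i \<le> ma + int (nat (Ma - ma))"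
    using ma(1) Ma(1) \<open>ma \<le> Ma\<close> by (auto simp: vge_def vle_def) (meson not_less)+
  then show "X \<in> QG" using descent g X by blast
qed

theorem theorem4p9:
  shows "freely_generated_by PGL2 quaternionic_group elem_gen"
  unfolding freely_generated_by_def
proof
  show "generate PGL2 (range elem_gen) = quaternionic_group"
    using gen_sub_Q Q_sub_gen unfolding QG_def by blast
  show "\<forall>w. w \<noteq> [] \<and> reduced_word w \<longrightarrow> word_eval PGL2 elem_gen w \<noteq> \<one>\<^bsub>PGL2\<^esub>"
    using freeness by blast
qed


end
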